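(* Let $\tau>0$, $\mathcal C=C([-\tau,0];\mathbb R^n)$, and let $f:\mathcal C\to\mathbb R^n$, $g:\mathcal C\to\mathbb R^{n\times d}$ satisfy (A2): there are constants $p\ge2$, $\varrho>0$, $a_1,a_2,a_3>0$ with $a_2>a_3$ and $\rho_1\in\mathcal W$ such that for all $\phi\in\mathcal C$ $$2\phi(0)^Tf(\phi)+(p-1)|g(\phi)|^2\le a_1\Big(1+|\phi(0)|^2+\frac1\tau\int_{-\tau}^0|\phi(\theta)|^2\mathrm d\theta\Big)-a_2|\phi(0)|^{2+\varrho}+a_3\int_{-\tau}^0|\phi(\theta)|^{2+\varrho}\rho_1(\theta)\mathrm d\theta.$$ Let $\varepsilon_0\in(0,1)$ satisfy $\frac{a_2+a_3}{2}<a_2(1-\varepsilon_0)^{p/2}$, let $\kappa\in(0,1)$ satisfy $\frac{(a_2+a_3)(1+\kappa)}{2}<a_2(1-\varepsilon_0)^{p/2}$, let $\Phi(\phi)=1+(1-\varepsilon_0)|\phi(0)|^2+\frac{\varepsilon_0}{\tau}\int_{-\tau}^0|\phi(\theta)|^2\mathrm d\theta$, and set $$\alpha_1=\frac p2\Big(a_2(1-\varepsilon_0)^{p/2}-(1+\kappa)(1-\varepsilon_0)\Big(\frac{a_3(p-2)}{p+\varrho}+\frac{a_2-a_3}{2}\Big)\Big),\quad \alpha_2=\frac{p(1+\kappa)\varepsilon_0}{2}\Big(\frac{a_3(p-2)}{p+\varrho}+\frac{a_2-a_3}{2}\Big),\quad\alpha_3=\frac{a_3p(2+\varrho)}{2(p+\varrho)}.$$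 Then $0<\alpha_2+\alpha_3<\alpha_1$, and for every $c>0$ there is a constant $L>0$ such that for all $\phi\in\mathcal C$ $$c\,\Phi(\phi)^{p/2}+\frac{(1-\varepsilon_0)p}{2}\Phi(\phi)^{\frac{p-2}{2}}\big(2\phi(0)^Tf(\phi)+(p-1)|g(\phi)|^2\big)\le L-\alpha_1|\phi(0)|^{p+\varrho}+\frac{\alpha_2}{\tau}\int_{-\tau}^0|\phi(\theta)|^{p+\varrho}\mathrm d\theta+\alpha_3\int_{-\tau}^0|\phi(\theta)|^{p+\varrho}\rho_1(\theta)\mathrm d\theta.$$
   Context: $|\cdot|$ is the Euclidean norm on $\mathbb R^n$ and the trace (Frobenius) norm on $\mathbb R^{n\times d}$. $\mathcal W$ is the set of bounded Borel measurable functions $\rho:[-\tau,0]\to[0,\infty)$ with $\int_{-\tau}^0\rho(\theta)\mathrm d\theta=1$. *)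

theory Defs
  imports "HOL-Analysis.Analysis"
begin

definition weightW :: "real \<Rightarrow> (real \<Rightarrow> real) set" where
  "weightW \<tau> = {\<rho>. set_borel_measurable borel {-\<tau>..0} \<rho>
      \<and> bounded (\<rho> ` {-\<tau>..0})
      \<and> (\<forall>\<theta>\<in>{-\<tau>..0}. 0 \<le> \<rho> \<theta>)
      \<and> \<rho> integrable_on {-\<tau>..0}
      \<and> integral {-\<tau>..0} \<rho> = 1}"

definition phase_space :: "real \<Rightarrow> (real \<Rightarrow> real ^ 'n) set" where
  "phase_space \<tau> = {\<phi>. continuous_on {-\<tau>..0} \<phi>}"

end

theory Submission
  imports Defs
begin


lemma TL:
  fixes u M q :: real
  assumes "u \<ge> 0" "M \<ge> 0" "q \<ge> 1"
  shows "q * M powr (q-1) * u - (q-1) * M powr q \<le> u powr q"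
proof (cases "M = 0 \<or> u = 0 \<or> q = 1")
  case True
  then show ?thesis using assms
    by (auto simp: mult_nonneg_nonneg)
next
  case False
  then have M: "M > 0" and u: "u > 0" and q: "q > 1" using assms by auto
  have "(M powr q) powr ((q-1)/q) * (u powr q) powr (1/q) \<le> ((q-1)/q) * M powr q + (1/q) * u powr q"
    by (rule Youngs_inequality_0) (use M u q in \<open>auto simp: field_simps\<close>)
  moreover have "(M powr q) powr ((q-1)/q) = M powr (q-1)" using q by (simp add: powr_powr)
  moreover have "(u powr q) powr (1/q) = u" using q u by (simp add: powr_powr)
  ultimately have "M powr (q-1) * u \<le> ((q-1)/q) * M powr q + (1/q) * u powr q" by simp
  then have "q * (M powr (q-1) * u) \<le> q * (((q-1)/q) * M powr q + (1/q) * u powr q)"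
    using q by (intro mult_left_mono) auto
  also have "\<dots> = (q-1) * M powr q + u powr q" using q by (simp add: field_simps)
  finally show ?thesis by (simp add: algebra_simps)
qed

lemma CV:
  fixes u1 u2 l q :: real
  assumes "u1 \<ge> 0" "u2 \<ge> 0" "0 \<le> l" "l \<le> 1" "q \<ge> 1"
  shows "(l*u1 + (1-l)*u2) powr q \<le> l * u1 powr q + (1-l) * u2 powr q"
proof -
  define M where "M = l*u1 + (1-l)*u2"
  have M0: "M \<ge> 0" using assms by (simp add: M_def)
  have a: "l * (q * M powr (q-1) * u1 - (q-1) * M powr q) \<le> l * u1 powr q"
    using TL[OF assms(1) M0 assms(5)] assms by (intro mult_left_mono) auto
  have b: "(1-l) * (q * M powr (q-1) * u2 - (q-1) * M powr q) \<le> (1-l) * u2 powr q"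
    using TL[OF assms(2) M0 assms(5)] assms by (intro mult_left_mono) auto
  have "l * (q * M powr (q-1) * u1 - (q-1) * M powr q) + (1-l) * (q * M powr (q-1) * u2 - (q-1) * M powr q)
     = q * M powr (q-1) * M - (q-1) * M powr q" by (simp add: M_def algebra_simps)
  also have "\<dots> = M powr q"
  proof (cases "M = 0")
    case False
    then have "M powr (q-1) * M = M powr q" using M0 by (simp add: powr_diff)
    then show ?thesis by (simp add: algebra_simps)
  qed simp
  finally show ?thesis using a b by (simp add: M_def)
qed

lemma YW:
  fixes x y w :: real
  assumes "x \<ge> 0" "y \<ge> 0" "0 \<le> w" "w \<le> 1"
  shows "x powr w * y powr (1-w) \<le> w*x + (1-w)*y"
proof (cases "x = 0 \<or> y = 0")
  case True then show ?thesis using assms by auto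
next
  case False then show ?thesis using assms by (intro Youngs_inequality_0) auto
qed

lemma F5:
  fixes K d vr p :: real
  assumes "K \<ge> 0" "d > 0" "vr > 0" "p \<ge> 0"
  shows "\<exists>C\<ge>0. \<forall>F\<ge>1. K * F powr (p/2) \<le> d * F powr ((p+vr)/2) + C"
proof -
  define R where "R = max 1 ((K/d) powr (2/vr))"
  have R1: "R \<ge> 1" by (simp add: R_def)
  show ?thesis
  proof (intro exI[of _ "K * R powr (p/2)"] conjI allI impI)
    show "0 \<le> K * R powr (p / 2)" using assms by simp
    fix F :: real assume F: "F \<ge> 1"
    show "K * F powr (p/2) \<le> d * F powr ((p+vr)/2) + K * R powr (p/2)"
    proof (cases "F \<le> R")
      case True
      have "K * F powr (p/2) \<le> K * R powr (p/2)"
        using True F assms by (intro mult_left_mono powr_mono2) auto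
      moreover have "0 \<le> d * F powr ((p+vr)/2)" using assms by simp
      ultimately show ?thesis by linarith
    next
      case False
      then have "(K/d) powr (2/vr) \<le> F" by (simp add: R_def)
      then have "((K/d) powr (2/vr)) powr (vr/2) \<le> F powr (vr/2)"
        using assms by (intro powr_mono2) auto
      moreover have "((K/d) powr (2/vr)) powr (vr/2) = K/d"
        using assms by (simp add: powr_powr)
      ultimately have "K/d \<le> F powr (vr/2)" by simp
      then have "K \<le> d * F powr (vr/2)" using assms by (simp add: field_simps)
      then have "K * F powr (p/2) \<le> d * F powr (vr/2) * F powr (p/2)"
        by (intro mult_right_mono) auto
      also have "\<dots> = d * F powr ((p+vr)/2)"
        by (simp add: mult.assoc add.commute flip: powr_add) (simp add: add_divide_distrib)
      finally show ?thesis using assms by (smt (verit) mult_nonneg_nonneg powr_ge_zero)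
    qed
  qed
qed

lemma F6:
  fixes q k :: real
  assumes "q > 1" "k > 0"
  shows "\<exists>C\<ge>0. \<forall>Z\<ge>0. (1+Z) powr q \<le> (1+k) * Z powr q + C"
proof -
  define l where "l = (1+k) powr (-1/(q-1))"
  have l0: "0 < l" using assms by (simp add: l_def)
  have l1: "l < 1" unfolding l_def using assms
    by (intro powr_less_one) (auto simp: field_simps)
  have lq: "l powr (1-q) = 1+k"
  proof -
    have "-1/(q-1) * (1-q) = 1" using assms by (simp add: field_simps)
    then show ?thesis using assms by (simp add: l_def powr_powr)
  qed
  define C where "C = (1-l) * (1/(1-l)) powr q"
  show ?thesis
  proof (intro exI[of _ C] conjI allI impI)
    show "C \<ge> 0" using l1 by (simp add: C_def)
    fix Z :: real assume Z: "Z \<ge> 0"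
    have "1 + Z = l * (Z/l) + (1-l) * (1/(1-l))" using l0 l1 by simp
    then have "(1+Z) powr q \<le> l * (Z/l) powr q + (1-l) * (1/(1-l)) powr q"
      using CV[of "Z/l" "1/(1-l)" l q] Z l0 l1 assms by (auto simp: add.commute)
    also have "l * (Z/l) powr q = l powr (1-q) * Z powr q"
      using l0 Z by (simp add: powr_divide powr_diff field_simps)
    finally show "(1+Z) powr q \<le> (1+k) * Z powr q + C" by (simp add: lq C_def)
  qed
qed

lemma core:
  fixes p vr a1 a2 a3 e k c :: real
  assumes p: "p \<ge> 2" and vr: "vr > 0" and a: "a1 > 0" "a2 > 0" "a3 > 0" "a2 > a3"
    and e: "0 < e" "e < 1" and k: "0 < k" and c: "c > 0"
  defines "B \<equiv> a3 * (p - 2) / (p + vr) + (a2 - a3) / 2"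
  shows "\<exists>L>0. \<forall>x I2 J IP Iq S. x \<ge> 0 \<longrightarrow> I2 \<ge> 0 \<longrightarrow> J \<ge> 0 \<longrightarrow> IP \<ge> 0 \<longrightarrow>
     ((1-e)*x^2 + e*I2) powr ((p+vr)/2) \<le> (1-e) * x powr (p+vr) + e*J \<longrightarrow>
     (1 + (1-e)*x^2 + e*I2) powr ((p-2)/2) * Iq
        \<le> (p-2)/(p+vr) * (1 + (1-e)*x^2 + e*I2) powr ((p+vr)/2) + (2+vr)/(p+vr) * IP \<longrightarrow>
     S \<le> a1 * (1 + x^2 + I2) - a2 * x powr (2+vr) + a3 * Iq \<longrightarrow>
     c * (1 + (1-e)*x^2 + e*I2) powr (p/2) + (1-e) * p / 2 * (1 + (1-e)*x^2 + e*I2) powr ((p-2)/2) * S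
     \<le> L - p / 2 * (a2 * (1 - e) powr (p / 2) - (1 + k) * (1 - e) * B) * x powr (p+vr)
        + p * (1 + k) * e / 2 * B * J + a3 * p * (2 + vr) / (2 * (p + vr)) * IP"
proof -
  define P where "P = p + vr"
  have P2: "P > 2" using p vr by (simp add: P_def)
  define m where "m = min e (1-e)"
  have m: "0 < m" "m \<le> e" "m \<le> 1-e" using e by (auto simp: m_def)
  define K where "K = c + (1-e)*p/2*a1/m"
  have K0: "K \<ge> 0" using c a e m p by (simp add: K_def)
  define d where "d = p/2*(a2-a3)/2"
  have d0: "d > 0" using a p by (simp add: d_def)
  obtain C1 where C1: "C1 \<ge> 0" "\<And>F. F \<ge> 1 \<Longrightarrow> K * F powr (p/2) \<le> d * F powr ((p+vr)/2) + C1"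
    using F5[OF K0 d0 vr, of p] p by (metis (no_types, lifting) dual_order.trans zero_le_numeral)
  obtain C2 where C2: "C2 \<ge> 0" "\<And>Z. Z \<ge> 0 \<Longrightarrow> (1+Z) powr ((p+vr)/2) \<le> (1+k) * Z powr ((p+vr)/2) + C2"
    using F6[of "(p+vr)/2" k] p vr k by auto
  define T where "T = p/2*a3*((p-2)/P)"
  have T0: "T \<ge> 0" using a p P2 by (simp add: T_def)
  define A where "A = d + (1-e)*T"
  have A0: "A \<ge> 0" using d0 e T0 by (simp add: A_def)
  have AB: "A \<le> p/2*B"
  proof -
    have "(1-e)*T \<le> 1 * T"
      using e T0 by (intro mult_right_mono) auto
    moreover have "p/2*B = T + d" by (simp add: B_def d_def P_def T_def distrib_left)
    ultimately show ?thesis by (simp add: A_def)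
  qed
  show ?thesis
  proof (intro exI[of _ "C1 + A*C2 + 1"] conjI allI impI)
    show "C1 + A*C2 + 1 > 0" using C1 C2 A0 by (simp add: add_nonneg_pos)
    fix x I2 J IP Iq S :: real
    assume x: "x \<ge> 0" and I2: "I2 \<ge> 0" and J: "J \<ge> 0" and IP: "IP \<ge> 0"
      and h1: "((1-e)*x^2 + e*I2) powr ((p+vr)/2) \<le> (1-e) * x powr (p+vr) + e*J"
      and h3: "(1 + (1-e)*x^2 + e*I2) powr ((p-2)/2) * Iq
        \<le> (p-2)/(p+vr) * (1 + (1-e)*x^2 + e*I2) powr ((p+vr)/2) + (2+vr)/(p+vr) * IP"
      and hS: "S \<le> a1 * (1 + x^2 + I2) - a2 * x powr (2+vr) + a3 * Iq"
    define Z where "Z = (1-e)*x^2 + e*I2"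
    have Z0: "Z \<ge> 0" using e x I2 by (simp add: Z_def)
    define F where "F = 1 + Z"
    have F1: "F \<ge> 1" using Z0 by (simp add: F_def)
    have FZ: "1 + (1-e)*x^2 + e*I2 = F" by (simp add: F_def Z_def)
    define G where "G = F powr ((p-2)/2)"
    have G0: "G \<ge> 0" by (simp add: G_def)
    define X where "X = x powr (p+vr)"
    define Fq where "Fq = F powr ((p+vr)/2)"
    define Fp where "Fp = F powr (p/2)"
    have cf: "(1-e) * p / 2 \<ge> 0" using e p by simp
    have s1: "(1-e) * p / 2 * G * S \<le> (1-e) * p / 2 * G * (a1 * (1 + x^2 + I2) - a2 * x powr (2+vr) + a3 * Iq)"
      using hS cf G0 by (intro mult_left_mono) auto
    have s2: "G * (1 + x^2 + I2) \<le> Fp / m"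
    proof -
      have "m * (1 + x^2 + I2) \<le> F"
      proof -
        have "m * 1 \<le> 1" "m * x^2 \<le> (1-e)*x^2" "m * I2 \<le> e * I2"
          using m e x I2 by (auto intro: mult_right_mono)
        then show ?thesis by (simp add: F_def Z_def distrib_left)
      qed
      then have "1 + x^2 + I2 \<le> F / m" using m by (simp add: field_simps)
      then have "G * (1 + x^2 + I2) \<le> G * (F / m)" using G0 by (intro mult_left_mono)
      also have "G * F = Fp"
      proof -
        have "G * F = F powr ((p-2)/2) * F powr 1" using F1 by (simp add: G_def)
        also have "\<dots> = F powr ((p-2)/2 + 1)" by (simp add: powr_add)
        also have "(p-2)/2 + 1 = p/2" by (simp add: field_simps)
        finally show ?thesis by (simp add: Fp_def)
      qed
      ultimately show ?thesis by (simp add: field_simps)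
    qed
    have s3: "(1-e) powr ((p-2)/2) * X \<le> G * x powr (2+vr)"
    proof (cases "x = 0")
      case True then show ?thesis using p vr by (simp add: X_def)
    next
      case False
      then have xp: "x > 0" using x by simp
      have "(1-e)*x^2 \<le> F" using I2 e by (simp add: F_def Z_def)
      then have "((1-e)*x^2) powr ((p-2)/2) \<le> G" unfolding G_def
        using e p by (intro powr_mono2) auto
      moreover have "((1-e)*x^2) powr ((p-2)/2) = (1-e) powr ((p-2)/2) * x powr (p-2)"
      proof -
        have "x^2 = x powr 2" using xp by (simp add: powr_realpow)
        moreover have "2 * ((p-2)/2) = p - 2" by simp
        ultimately have "(x^2) powr ((p-2)/2) = x powr (p-2)" by (metis powr_powr)
        then show ?thesis using e xp by (simp add: powr_mult)
      qed
      ultimately have "(1-e) powr ((p-2)/2) * x powr (p-2) * x powr (2+vr) \<le> G * x powr (2+vr)"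
        by (intro mult_right_mono) auto
      moreover have "x powr (p-2) * x powr (2+vr) = X" by (simp add: X_def flip: powr_add)
      ultimately show ?thesis by (simp add: mult.assoc)
    qed
    have s4: "(1-e) * p / 2 * a3 * (G * Iq) \<le> (1-e) * T * Fq + (1-e) * p / 2 * a3 * ((2+vr)/P) * IP"
    proof -
      have "(1-e) * p / 2 * a3 * (G * Iq) \<le> (1-e) * p / 2 * a3 * ((p-2)/P * Fq + (2+vr)/P * IP)"
        using h3 e p a unfolding FZ G_def Fq_def P_def by (intro mult_left_mono) auto
      moreover have "(1-e) * p / 2 * a3 * ((p-2)/P * Fq + (2+vr)/P * IP) = (1-e) * T * Fq + (1-e) * p / 2 * a3 * ((2+vr)/P) * IP"
        using P2 by (simp add: T_def field_simps)
      ultimately show ?thesis by simp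
    qed
    have s5: "K * Fp \<le> d * Fq + C1" using C1(2)[OF F1] by (simp add: Fp_def Fq_def)
    have s6: "Fq \<le> (1+k) * ((1-e) * X + e * J) + C2"
    proof -
      have "Fq \<le> (1+k) * Z powr ((p+vr)/2) + C2" using C2(2)[OF Z0] by (simp add: Fq_def F_def)
      moreover have "(1+k) * Z powr ((p+vr)/2) \<le> (1+k) * ((1-e) * X + e * J)"
        using h1 k unfolding Z_def X_def by (intro mult_left_mono) auto
      ultimately show ?thesis by linarith
    qed
    have s6': "A * Fq \<le> A * ((1+k) * ((1-e) * X + e * J) + C2)" using s6 A0 by (rule mult_left_mono)
    have X0: "X \<ge> 0" by (simp add: X_def)
    have s7: "A * (1+k) * (1-e) * X \<le> p/2*B * (1+k) * (1-e) * X"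
      using AB k e X0 by (intro mult_right_mono) auto
    have s8: "A * (1+k) * e * J \<le> p/2*B * (1+k) * e * J"
      using AB k e J by (intro mult_right_mono) auto
    have s9: "(1-e) * p / 2 * a3 * ((2+vr)/P) * IP \<le> a3 * p * (2 + vr) / (2 * (p + vr)) * IP"
    proof -
      have "(1-e) * (p / 2 * a3 * ((2+vr)/P) * IP) \<le> 1 * (p / 2 * a3 * ((2+vr)/P) * IP)"
        using e p a IP P2 vr by (intro mult_right_mono) auto
      then show ?thesis by (simp add: P_def mult_ac)
    qed
    have s10: "(1-e) * p / 2 * a2 * ((1-e) powr ((p-2)/2) * X) = p/2 * a2 * (1-e) powr (p/2) * X"
    proof -
      have "(1-e) * (1-e) powr ((p-2)/2) = (1-e) powr (p/2)"
      proof -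
        have "(1-e) * (1-e) powr ((p-2)/2) = (1-e) powr (1 + (p-2)/2)" using e by (simp add: powr_add)
        also have "1 + (p-2)/2 = p/2" by (simp add: field_simps)
        finally show ?thesis .
      qed
      then have "p/2*a2*X*((1-e) * (1-e) powr ((p-2)/2)) = p/2*a2*X*(1-e) powr (p/2)" by simp
      moreover have "(1-e) * p / 2 * a2 * ((1-e) powr ((p-2)/2) * X) = p/2*a2*X*((1-e) * (1-e) powr ((p-2)/2))"
        by (simp add: field_simps)
      moreover have "p/2*a2*X*(1-e) powr (p/2) = p/2 * a2 * (1-e) powr (p/2) * X" by (simp add: algebra_simps)
      ultimately show ?thesis by simp
    qed
    have s11: "(1-e) * p / 2 * a2 * ((1-e) powr ((p-2)/2) * X) \<le> (1-e) * p / 2 * a2 * (G * x powr (2+vr))"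
      using s3 e p a by (intro mult_left_mono) auto
    have s12: "(1-e) * p / 2 * a1 * (G * (1 + x^2 + I2)) \<le> (1-e) * p / 2 * a1 * (Fp / m)"
      using s2 e p a by (intro mult_left_mono) auto
    have eK: "c * Fp + (1-e) * p / 2 * a1 * (Fp / m) = K * Fp" using m by (simp add: K_def field_simps)
    have eS: "(1-e) * p / 2 * G * (a1 * (1 + x^2 + I2) - a2 * x powr (2+vr) + a3 * Iq)
       = (1-e) * p / 2 * a1 * (G * (1 + x^2 + I2)) - (1-e) * p / 2 * a2 * (G * x powr (2+vr))
         + (1-e) * p / 2 * a3 * (G * Iq)" by (simp add: field_simps)
    have eA: "A * ((1+k) * ((1-e) * X + e * J) + C2) = A * (1+k) * (1-e) * X + A * (1+k) * e * J + A * C2"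
      by (simp add: field_simps)
    have eAd: "A * Fq = d * Fq + (1-e) * T * Fq" by (simp add: A_def field_simps)
    have eR: "p / 2 * (a2 * (1 - e) powr (p / 2) - (1 + k) * (1 - e) * B) * X
       = p/2 * a2 * (1-e) powr (p/2) * X - p/2*B * (1+k) * (1-e) * X" by (simp add: field_simps)
    have eR2: "p * (1 + k) * e / 2 * B * J = p/2*B * (1+k) * e * J" by (simp add: field_simps)
    have "c * Fp + (1-e) * p / 2 * G * S
      \<le> C1 + A * C2 + 1 - p / 2 * (a2 * (1 - e) powr (p / 2) - (1 + k) * (1 - e) * B) * X
        + p * (1 + k) * e / 2 * B * J + a3 * p * (2 + vr) / (2 * (p + vr)) * IP"
      using s1 s4 s5 s6' s7 s8 s9 s10 s11 s12 eK eS eA eAd eR eR2 by linarith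
    then show "c * (1 + (1-e)*x^2 + e*I2) powr (p/2) + (1-e) * p / 2 * (1 + (1-e)*x^2 + e*I2) powr ((p-2)/2) * S
     \<le> C1 + A * C2 + 1 - p / 2 * (a2 * (1 - e) powr (p / 2) - (1 + k) * (1 - e) * B) * x powr (p+vr)
        + p * (1 + k) * e / 2 * B * J + a3 * p * (2 + vr) / (2 * (p + vr)) * IP"
      unfolding FZ by (simp add: Fp_def G_def X_def)
  qed
qed



lemma INT:
  fixes h :: "real \<Rightarrow> real"
  assumes h: "continuous_on {-\<tau>..0} h" and W: "\<rho>1 \<in> weightW \<tau>"
  shows "(\<lambda>\<theta>. h \<theta> * \<rho>1 \<theta>) integrable_on {-\<tau>..0}"
proof -
  have S: "{-\<tau>..0::real} \<in> sets lebesgue" by simp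
  have "(\<lambda>\<theta>. h \<theta> * \<rho>1 \<theta>) absolutely_integrable_on {-\<tau>..0}"
  proof (rule absolutely_integrable_bounded_measurable_product_real)
    show "h \<in> borel_measurable (lebesgue_on {-\<tau>..0})"
      using continuous_imp_measurable_on_sets_lebesgue[OF h S] .
    show "bounded (h ` {-\<tau>..0})"
      using compact_continuous_image[OF h] compact_imp_bounded by auto
    show "\<rho>1 absolutely_integrable_on {-\<tau>..0}"
      using W by (intro nonnegative_absolutely_integrable_1) (auto simp: weightW_def)
  qed (rule S)
  then show ?thesis using absolutely_integrable_on_def by blast
qed

lemma contpow:
  fixes \<phi> :: "real \<Rightarrow> real ^ 'n"
  assumes "continuous_on {-\<tau>..0} \<phi>" "a > 0"
  shows "continuous_on {-\<tau>..0} (\<lambda>\<theta>. norm (\<phi> \<theta>) powr a)"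
  using assms by (intro continuous_on_powr' continuous_intros) auto

lemma T:
  fixes \<tau> c :: real assumes "\<tau> > 0"
  shows "integral {-\<tau>..0} (\<lambda>_. c) = \<tau> * c"
  using assms by simp

lemma Jensen:
  fixes \<phi> :: "real \<Rightarrow> real ^ 'n" and q \<tau> :: real
  assumes tau: "\<tau> > 0" and q: "q \<ge> 1" and phi: "continuous_on {-\<tau>..0} \<phi>"
  shows "((1/\<tau>) * integral {-\<tau>..0} (\<lambda>\<theta>. (norm (\<phi> \<theta>))^2)) powr q
     \<le> (1/\<tau>) * integral {-\<tau>..0} (\<lambda>\<theta>. norm (\<phi> \<theta>) powr (2*q))"
proof -
  define S where "S = {-\<tau>..0::real}"
  define M where "M = (1/\<tau>) * integral S (\<lambda>\<theta>. (norm (\<phi> \<theta>))^2)"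
  have cu: "continuous_on S (\<lambda>\<theta>. (norm (\<phi> \<theta>))^2)" unfolding S_def
    using phi by (intro continuous_intros)
  have iu: "(\<lambda>\<theta>. (norm (\<phi> \<theta>))^2) integrable_on S" unfolding S_def
    using cu by (intro integrable_continuous_interval) (simp add: S_def)
  have M0: "M \<ge> 0" unfolding M_def using tau iu by (intro mult_nonneg_nonneg integral_nonneg) auto
  have ip: "(\<lambda>\<theta>. norm (\<phi> \<theta>) powr (2*q)) integrable_on S" unfolding S_def
    using contpow[OF phi, of "2*q"] q by (intro integrable_continuous_interval) auto
  have pw: "q * M powr (q-1) * (norm (\<phi> \<theta>))^2 - (q-1) * M powr q \<le> norm (\<phi> \<theta>) powr (2*q)" for \<theta>
  proof -
    have "q * M powr (q-1) * (norm (\<phi> \<theta>))^2 - (q-1) * M powr q \<le> ((norm (\<phi> \<theta>))^2) powr q"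
      using TL[OF _ M0 q] by simp
    also have "((norm (\<phi> \<theta>))^2) powr q = norm (\<phi> \<theta>) powr (2*q)"
    proof (cases "\<phi> \<theta> = 0")
      case False
      then have "(norm (\<phi> \<theta>))^2 = norm (\<phi> \<theta>) powr 2" by (simp add: powr_realpow)
      then show ?thesis by (metis powr_powr)
    qed (use q in simp)
    finally show ?thesis .
  qed
  have "integral S (\<lambda>\<theta>. q * M powr (q-1) * (norm (\<phi> \<theta>))^2 - (q-1) * M powr q)
      \<le> integral S (\<lambda>\<theta>. norm (\<phi> \<theta>) powr (2*q))"
  proof (rule integral_le)
    show "(\<lambda>\<theta>. q * M powr (q-1) * (norm (\<phi> \<theta>))^2 - (q-1) * M powr q) integrable_on S"
      unfolding S_def using phi by (intro integrable_continuous_interval continuous_intros)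
  qed (use pw ip in auto)
  moreover have "integral S (\<lambda>\<theta>. q * M powr (q-1) * (norm (\<phi> \<theta>))^2 - (q-1) * M powr q)
      = q * M powr (q-1) * integral S (\<lambda>\<theta>. (norm (\<phi> \<theta>))^2) - \<tau> * ((q-1) * M powr q)"
  proof (subst integral_diff)
    show "(\<lambda>\<theta>. q * M powr (q-1) * (norm (\<phi> \<theta>))^2) integrable_on S"
      unfolding S_def using phi by (intro integrable_continuous_interval continuous_intros)
  qed (use tau in \<open>auto simp: S_def\<close>)
  moreover have "integral S (\<lambda>\<theta>. (norm (\<phi> \<theta>))^2) = \<tau> * M" using tau by (simp add: M_def)
  moreover have "q * M powr (q-1) * (\<tau> * M) - \<tau> * ((q-1) * M powr q) = \<tau> * M powr q"
  proof (cases "M = 0")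
    case False
    then have "M powr (q-1) * M = M powr q" using M0 by (simp add: powr_diff)
    then show ?thesis by (simp add: algebra_simps)
  qed simp
  ultimately have "\<tau> * M powr q \<le> integral S (\<lambda>\<theta>. norm (\<phi> \<theta>) powr (2*q))" by simp
  then show ?thesis using tau by (simp add: M_def S_def field_simps)
qed

lemma F3:
  fixes \<phi> :: "real \<Rightarrow> real ^ 'n" and F p vr \<tau> :: real
  assumes F: "F \<ge> 1" and p: "p \<ge> 2" and vr: "vr > 0"
    and phi: "continuous_on {-\<tau>..0} \<phi>" and W: "\<rho>1 \<in> weightW \<tau>"
  shows "F powr ((p-2)/2) * integral {-\<tau>..0} (\<lambda>\<theta>. norm (\<phi> \<theta>) powr (2+vr) * \<rho>1 \<theta>)
     \<le> (p-2)/(p+vr) * F powr ((p+vr)/2) + (2+vr)/(p+vr) * integral {-\<tau>..0} (\<lambda>\<theta>. norm (\<phi> \<theta>) powr (p+vr) * \<rho>1 \<theta>)"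
proof -
  define S where "S = {-\<tau>..0::real}"
  define w where "w = (p-2)/(p+vr)"
  have w: "0 \<le> w" "w \<le> 1" using p vr by (auto simp: w_def)
  have rho0: "\<And>\<theta>. \<theta> \<in> S \<Longrightarrow> 0 \<le> \<rho>1 \<theta>" using W by (auto simp: weightW_def S_def)
  have irho: "\<rho>1 integrable_on S" "integral S \<rho>1 = 1" using W by (auto simp: weightW_def S_def)
  have i1: "(\<lambda>\<theta>. norm (\<phi> \<theta>) powr (2+vr) * \<rho>1 \<theta>) integrable_on S"
    unfolding S_def using contpow[OF phi, of "2+vr"] vr W by (intro INT) auto
  have i2: "(\<lambda>\<theta>. norm (\<phi> \<theta>) powr (p+vr) * \<rho>1 \<theta>) integrable_on S"
    unfolding S_def using contpow[OF phi, of "p+vr"] vr p W by (intro INT) auto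
  have pw: "F powr ((p-2)/2) * (norm (\<phi> \<theta>) powr (2+vr) * \<rho>1 \<theta>)
     \<le> w * F powr ((p+vr)/2) * \<rho>1 \<theta> + (1-w) * (norm (\<phi> \<theta>) powr (p+vr) * \<rho>1 \<theta>)" if th: "\<theta> \<in> S" for \<theta>
  proof -
    have "(F powr ((p+vr)/2)) powr w * (norm (\<phi> \<theta>) powr (p+vr)) powr (1-w)
       \<le> w * F powr ((p+vr)/2) + (1-w) * norm (\<phi> \<theta>) powr (p+vr)"
      using YW w by auto
    moreover have "(F powr ((p+vr)/2)) powr w = F powr ((p-2)/2)"
    proof -
      have "(p+vr)/2 * w = (p-2)/2" using p vr by (simp add: w_def field_simps)
      then show ?thesis by (simp add: powr_powr)
    qed
    moreover have "(norm (\<phi> \<theta>) powr (p+vr)) powr (1-w) = norm (\<phi> \<theta>) powr (2+vr)"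
    proof -
      have "(p+vr) * (1-w) = 2+vr" using p vr by (simp add: w_def field_simps)
      then show ?thesis by (simp add: powr_powr)
    qed
    ultimately have "F powr ((p-2)/2) * norm (\<phi> \<theta>) powr (2+vr)
       \<le> w * F powr ((p+vr)/2) + (1-w) * norm (\<phi> \<theta>) powr (p+vr)" by simp
    then have "F powr ((p-2)/2) * norm (\<phi> \<theta>) powr (2+vr) * \<rho>1 \<theta>
       \<le> (w * F powr ((p+vr)/2) + (1-w) * norm (\<phi> \<theta>) powr (p+vr)) * \<rho>1 \<theta>"
      using rho0[OF th] by (rule mult_right_mono)
    then show ?thesis by (simp add: algebra_simps)
  qed
  have "integral S (\<lambda>\<theta>. F powr ((p-2)/2) * (norm (\<phi> \<theta>) powr (2+vr) * \<rho>1 \<theta>))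
     \<le> integral S (\<lambda>\<theta>. w * F powr ((p+vr)/2) * \<rho>1 \<theta> + (1-w) * (norm (\<phi> \<theta>) powr (p+vr) * \<rho>1 \<theta>))"
    using pw i1 i2 irho by (intro integral_le integrable_add integrable_on_mult_right) auto
  also have "\<dots> = w * F powr ((p+vr)/2) * integral S \<rho>1 + (1-w) * integral S (\<lambda>\<theta>. norm (\<phi> \<theta>) powr (p+vr) * \<rho>1 \<theta>)"
    using i2 irho by (subst integral_add) (auto intro: integrable_on_mult_right)
  moreover have "1 - w = (2+vr)/(p+vr)" using p vr by (simp add: w_def field_simps)
  ultimately show ?thesis using irho by (simp add: S_def w_def)
qed


theorem lemma3p2:
  fixes \<tau> p vr a1 a2 a3 \<epsilon>0 \<kappa> :: real
    and f :: "(real \<Rightarrow> real ^ 'n) \<Rightarrow> real ^ 'n"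
    and g :: "(real \<Rightarrow> real ^ 'n) \<Rightarrow> real ^ 'd ^ 'n"
    and \<rho>1 :: "real \<Rightarrow> real"
  assumes tau: "\<tau> > 0"
    and p: "p \<ge> 2" and rho: "vr > 0"
    and a: "a1 > 0" "a2 > 0" "a3 > 0" "a2 > a3"
    and W: "\<rho>1 \<in> weightW \<tau>"
    and A2: "\<And>\<phi>. \<phi> \<in> phase_space \<tau> \<Longrightarrow>
        2 * (\<phi> 0 \<bullet> f \<phi>) + (p - 1) * (norm (g \<phi>))\<^sup>2
        \<le> a1 * (1 + (norm (\<phi> 0))\<^sup>2 + (1 / \<tau>) * integral {-\<tau>..0} (\<lambda>\<theta>. (norm (\<phi> \<theta>))\<^sup>2))
           - a2 * norm (\<phi> 0) powr (2 + vr)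
           + a3 * integral {-\<tau>..0} (\<lambda>\<theta>. norm (\<phi> \<theta>) powr (2 + vr) * \<rho>1 \<theta>)"
    and eps: "0 < \<epsilon>0" "\<epsilon>0 < 1" "(a2 + a3) / 2 < a2 * (1 - \<epsilon>0) powr (p / 2)"
    and kap: "0 < \<kappa>" "\<kappa> < 1" "(a2 + a3) * (1 + \<kappa>) / 2 < a2 * (1 - \<epsilon>0) powr (p / 2)"
    and Phi_def: "\<Phi> \<equiv> (\<lambda>\<phi>::real \<Rightarrow> real ^ 'n. 1 + (1 - \<epsilon>0) * (norm (\<phi> 0))\<^sup>2
        + (\<epsilon>0 / \<tau>) * integral {-\<tau>..0} (\<lambda>\<theta>. (norm (\<phi> \<theta>))\<^sup>2))"
    and alpha1_def: "\<alpha>1 \<equiv> p / 2 * (a2 * (1 - \<epsilon>0) powr (p / 2)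
        - (1 + \<kappa>) * (1 - \<epsilon>0) * (a3 * (p - 2) / (p + vr) + (a2 - a3) / 2))"
    and alpha2_def: "\<alpha>2 \<equiv> p * (1 + \<kappa>) * \<epsilon>0 / 2 * (a3 * (p - 2) / (p + vr) + (a2 - a3) / 2)"
    and alpha3_def: "\<alpha>3 \<equiv> a3 * p * (2 + vr) / (2 * (p + vr))"
  shows "0 < \<alpha>2 + \<alpha>3 \<and> \<alpha>2 + \<alpha>3 < \<alpha>1 \<and>
    (\<forall>c>0. \<exists>L>0. \<forall>\<phi>\<in>phase_space \<tau>.
       c * \<Phi> \<phi> powr (p / 2)
       + (1 - \<epsilon>0) * p / 2 * \<Phi> \<phi> powr ((p - 2) / 2)
         * (2 * (\<phi> 0 \<bullet> f \<phi>) + (p - 1) * (norm (g \<phi>))\<^sup>2)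
       \<le> L - \<alpha>1 * norm (\<phi> 0) powr (p + vr)
         + \<alpha>2 / \<tau> * integral {-\<tau>..0} (\<lambda>\<theta>. norm (\<phi> \<theta>) powr (p + vr))
         + \<alpha>3 * integral {-\<tau>..0} (\<lambda>\<theta>. norm (\<phi> \<theta>) powr (p + vr) * \<rho>1 \<theta>))"
  proof -
  define B where "B = a3 * (p - 2) / (p + vr) + (a2 - a3) / 2"
  have P2: "p + vr > 2" using p rho by simp
  have B0: "B > 0" using a p P2 by (simp add: B_def add_nonneg_pos)
  define E where "E = (1 - \<epsilon>0) powr (p / 2)"
  define Q where "Q = a3 * (2 + vr) / (p + vr)"
  have Q0: "Q > 0" using a rho P2 by (simp add: Q_def)
  have pv: "p + vr \<noteq> 0" using P2 by simp
  have BQ0: "a3 * (p - 2) / (p + vr) + a3 * (2 + vr) / (p + vr) = a3"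
  proof -
    have "a3 * (p - 2) / (p + vr) + a3 * (2 + vr) / (p + vr) = a3 * (p + vr) / (p + vr)"
      by (simp add: add_divide_distrib[symmetric] algebra_simps)
    then show ?thesis using pv by simp
  qed
  have BQ: "B + Q = (a2 + a3) / 2" proof -
    define u where "u = a3 * (p - 2) / (p + vr)"
    define v where "v = a3 * (2 + vr) / (p + vr)"
    have "u + v = a3" using BQ0 by (simp add: u_def v_def)
    then have "u + (a2 - a3) / 2 + v = (a2 + a3) / 2" by (simp add: field_simps)
    then show ?thesis by (simp add: B_def Q_def u_def v_def)
  qed
  have e1: "\<alpha>1 = p/2 * (a2 * E - (1+\<kappa>)*(1-\<epsilon>0)*B)" by (simp add: alpha1_def E_def B_def)
  have e2: "\<alpha>2 = p/2 * ((1+\<kappa>)*\<epsilon>0*B)" by (simp add: alpha2_def B_def)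
  have e3: "\<alpha>3 = p/2 * Q" by (simp add: alpha3_def Q_def)
  have part1: "0 < \<alpha>2 + \<alpha>3 \<and> \<alpha>2 + \<alpha>3 < \<alpha>1"
  proof
    have "(1+\<kappa>)*\<epsilon>0*B > 0" using kap eps B0 by simp
    then have "p/2 * ((1+\<kappa>)*\<epsilon>0*B) > 0" "p/2 * Q > 0" using Q0 p by simp_all
    then show "0 < \<alpha>2 + \<alpha>3" unfolding e2 e3 by linarith
  next
    have "(1+\<kappa>)*B + Q < (1+\<kappa>)*B + (1+\<kappa>)*Q" using Q0 kap by simp
    also have "\<dots> = (1+\<kappa>)*(B+Q)" by (simp add: algebra_simps)
    also have "\<dots> = (a2+a3)*(1+\<kappa>)/2" using BQ by simp
    also have "\<dots> < a2 * E" using kap(3) by (simp add: E_def)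
    finally have "(1+\<kappa>)*B + Q < a2 * E" .
    then have "(1+\<kappa>)*\<epsilon>0*B + Q < a2 * E - (1+\<kappa>)*(1-\<epsilon>0)*B" by (simp add: algebra_simps)
    then have "p/2 * ((1+\<kappa>)*\<epsilon>0*B + Q) < p/2 * (a2 * E - (1+\<kappa>)*(1-\<epsilon>0)*B)"
      using p by (intro mult_strict_left_mono) auto
    moreover have "p/2 * ((1+\<kappa>)*\<epsilon>0*B + Q) = \<alpha>2 + \<alpha>3" unfolding e2 e3 by (simp add: algebra_simps)
    ultimately show "\<alpha>2 + \<alpha>3 < \<alpha>1" using e1 by simp
  qed
  have part2: "\<forall>c>0. \<exists>L>0. \<forall>\<phi>\<in>phase_space \<tau>.
       c * \<Phi> \<phi> powr (p / 2)
       + (1 - \<epsilon>0) * p / 2 * \<Phi> \<phi> powr ((p - 2) / 2)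
         * (2 * (\<phi> 0 \<bullet> f \<phi>) + (p - 1) * (norm (g \<phi>))\<^sup>2)
       \<le> L - \<alpha>1 * norm (\<phi> 0) powr (p + vr)
         + \<alpha>2 / \<tau> * integral {-\<tau>..0} (\<lambda>\<theta>. norm (\<phi> \<theta>) powr (p + vr))
         + \<alpha>3 * integral {-\<tau>..0} (\<lambda>\<theta>. norm (\<phi> \<theta>) powr (p + vr) * \<rho>1 \<theta>)"
  proof (intro allI impI)
    fix c :: real assume c: "c > 0"
    obtain L where L0: "L > 0" and L: "\<And>x I2 J IP Iq S. x \<ge> 0 \<Longrightarrow> I2 \<ge> 0 \<Longrightarrow> J \<ge> 0 \<Longrightarrow> IP \<ge> 0 \<Longrightarrow>
     ((1-\<epsilon>0)*x^2 + \<epsilon>0*I2) powr ((p+vr)/2) \<le> (1-\<epsilon>0) * x powr (p+vr) + \<epsilon>0*J \<Longrightarrow>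
     (1 + (1-\<epsilon>0)*x^2 + \<epsilon>0*I2) powr ((p-2)/2) * Iq
        \<le> (p-2)/(p+vr) * (1 + (1-\<epsilon>0)*x^2 + \<epsilon>0*I2) powr ((p+vr)/2) + (2+vr)/(p+vr) * IP \<Longrightarrow>
     S \<le> a1 * (1 + x^2 + I2) - a2 * x powr (2+vr) + a3 * Iq \<Longrightarrow>
     c * (1 + (1-\<epsilon>0)*x^2 + \<epsilon>0*I2) powr (p/2) + (1-\<epsilon>0) * p / 2 * (1 + (1-\<epsilon>0)*x^2 + \<epsilon>0*I2) powr ((p-2)/2) * S
     \<le> L - p / 2 * (a2 * (1 - \<epsilon>0) powr (p / 2) - (1 + \<kappa>) * (1 - \<epsilon>0) * B) * x powr (p+vr)
        + p * (1 + \<kappa>) * \<epsilon>0 / 2 * B * J + a3 * p * (2 + vr) / (2 * (p + vr)) * IP"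
      using core[OF p rho a eps(1,2) kap(1) c] unfolding B_def by blast
    show "\<exists>L>0. \<forall>\<phi>\<in>phase_space \<tau>.
       c * \<Phi> \<phi> powr (p / 2)
       + (1 - \<epsilon>0) * p / 2 * \<Phi> \<phi> powr ((p - 2) / 2)
         * (2 * (\<phi> 0 \<bullet> f \<phi>) + (p - 1) * (norm (g \<phi>))\<^sup>2)
       \<le> L - \<alpha>1 * norm (\<phi> 0) powr (p + vr)
         + \<alpha>2 / \<tau> * integral {-\<tau>..0} (\<lambda>\<theta>. norm (\<phi> \<theta>) powr (p + vr))
         + \<alpha>3 * integral {-\<tau>..0} (\<lambda>\<theta>. norm (\<phi> \<theta>) powr (p + vr) * \<rho>1 \<theta>)"
    proof (intro exI[of _ L] conjI ballI)
      show "L > 0" by (rule L0)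
      fix \<phi> :: "real \<Rightarrow> real ^ 'n" assume ph: "\<phi> \<in> phase_space \<tau>"
      then have phi: "continuous_on {-\<tau>..0} \<phi>" by (simp add: phase_space_def)
      define x where "x = norm (\<phi> 0)"
      define I2 where "I2 = (1/\<tau>) * integral {-\<tau>..0} (\<lambda>\<theta>. (norm (\<phi> \<theta>))\<^sup>2)"
      define J where "J = (1/\<tau>) * integral {-\<tau>..0} (\<lambda>\<theta>. norm (\<phi> \<theta>) powr (p + vr))"
      define IP where "IP = integral {-\<tau>..0} (\<lambda>\<theta>. norm (\<phi> \<theta>) powr (p + vr) * \<rho>1 \<theta>)"
      define Iq where "Iq = integral {-\<tau>..0} (\<lambda>\<theta>. norm (\<phi> \<theta>) powr (2 + vr) * \<rho>1 \<theta>)"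
      define S where "S = 2 * (\<phi> 0 \<bullet> f \<phi>) + (p - 1) * (norm (g \<phi>))\<^sup>2"
      have x0: "x \<ge> 0" by (simp add: x_def)
      have I20: "I2 \<ge> 0" unfolding I2_def using tau phi
        by (intro mult_nonneg_nonneg integral_nonneg integrable_continuous_interval continuous_intros) auto
      have J0: "J \<ge> 0" unfolding J_def using tau contpow[OF phi, of "p+vr"] P2
        by (intro mult_nonneg_nonneg integral_nonneg integrable_continuous_interval) auto
      have IP0: "IP \<ge> 0" unfolding IP_def using W contpow[OF phi, of "p+vr"] P2
        by (intro integral_nonneg INT) (auto simp: weightW_def)
      have h1: "((1-\<epsilon>0)*x^2 + \<epsilon>0*I2) powr ((p+vr)/2) \<le> (1-\<epsilon>0) * x powr (p+vr) + \<epsilon>0*J"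
      proof -
        have "((1-\<epsilon>0)*x^2 + (1-(1-\<epsilon>0))*I2) powr ((p+vr)/2) \<le> (1-\<epsilon>0) * (x^2) powr ((p+vr)/2) + (1-(1-\<epsilon>0)) * I2 powr ((p+vr)/2)"
          using eps P2 I20 by (intro CV) auto
        moreover have "(x^2) powr ((p+vr)/2) = x powr (p+vr)"
        proof (cases "x = 0")
          case False
          then have "x^2 = x powr 2" using x0 by (simp add: powr_realpow)
          moreover have "2 * ((p+vr)/2) = p+vr" by simp
          ultimately show ?thesis by (metis powr_powr)
        qed simp
        moreover have "I2 powr ((p+vr)/2) \<le> J"
        proof -
          have eq2: "2 * ((p+vr)/2) = p + vr" by simp
          have "(1::real) \<le> (p+vr)/2" using P2 by simp
          from Jensen[OF tau this phi] show ?thesis unfolding eq2 I2_def J_def .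
        qed
        ultimately show ?thesis using eps by (smt (verit) mult_left_mono)
      qed
      have h3: "(1 + (1-\<epsilon>0)*x^2 + \<epsilon>0*I2) powr ((p-2)/2) * Iq
        \<le> (p-2)/(p+vr) * (1 + (1-\<epsilon>0)*x^2 + \<epsilon>0*I2) powr ((p+vr)/2) + (2+vr)/(p+vr) * IP"
        unfolding Iq_def IP_def
        using eps I20 by (intro F3[OF _ p rho phi W]) (simp add: add_nonneg_nonneg)
      have hS: "S \<le> a1 * (1 + x^2 + I2) - a2 * x powr (2+vr) + a3 * Iq"
        using A2[OF ph] by (simp add: S_def x_def I2_def Iq_def)
      note main = L[OF x0 I20 J0 IP0 h1 h3 hS]
      have eP: "\<Phi> \<phi> = 1 + (1-\<epsilon>0)*x^2 + \<epsilon>0*I2" by (simp add: Phi_def x_def I2_def)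
      have eJ: "\<alpha>2 / \<tau> * integral {-\<tau>..0} (\<lambda>\<theta>. norm (\<phi> \<theta>) powr (p + vr)) = p * (1 + \<kappa>) * \<epsilon>0 / 2 * B * J"
        by (simp add: alpha2_def B_def J_def)
      have e1': "\<alpha>1 = p / 2 * (a2 * (1 - \<epsilon>0) powr (p / 2) - (1 + \<kappa>) * (1 - \<epsilon>0) * B)"
        by (simp add: alpha1_def B_def)
      have e3': "\<alpha>3 = a3 * p * (2 + vr) / (2 * (p + vr))" by (simp add: alpha3_def)
      show "c * \<Phi> \<phi> powr (p / 2)
       + (1 - \<epsilon>0) * p / 2 * \<Phi> \<phi> powr ((p - 2) / 2)
         * (2 * (\<phi> 0 \<bullet> f \<phi>) + (p - 1) * (norm (g \<phi>))\<^sup>2)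
       \<le> L - \<alpha>1 * norm (\<phi> 0) powr (p + vr)
         + \<alpha>2 / \<tau> * integral {-\<tau>..0} (\<lambda>\<theta>. norm (\<phi> \<theta>) powr (p + vr))
         + \<alpha>3 * integral {-\<tau>..0} (\<lambda>\<theta>. norm (\<phi> \<theta>) powr (p + vr) * \<rho>1 \<theta>)"
        using main unfolding eP eJ e1' e3' by (simp add: S_def x_def IP_def)
    qed
  qed
  show ?thesis using part1 part2 by blast
qed

end
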